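(* Let $A$ and $B$ be finite groups, each with at least $2$ elements. For an integer $m\geq 1$, let $s_m$ be the number of elements $g\in A$ with $g^m=1$. For a divisor $n$ of $|B|$, let $d_n$ be the number of elements of $B$ of order $n$. Then $$a(A\wr B)=\sum_{m \mid |A|,\ n \mid |B|} \frac{m}{n}\left(\frac{s_m}{|A|}\right)^{n} d_{|B|/n}\,\tau\!\left(\frac{|A|}{m}\right),$$ where the sum runs over all positive divisors $m$ of $|A|$ and all positive divisors $n$ of $|B|$.
   Context: For a finite group $G$, the average order is $a(G)=\frac{1}{|G|}\sum_{g\in G}\mathrm{order}(g)$. For groups $A,B$, let $K=\prod_{b\in B}A$, on which $B$ acts by $x\cdot(\alpha_b)_b=(\alpha_{x^{-1}b})_b$ for $x\in B$; the wreath product $A\wr B$ is the semidirect product $K\rtimes B$ for this action. For a positive integer $n$, $\tau(n)=\prod_{p\mid n,\ p\text{ prime}}(1-p)$ (so $\tau(1)=1$). *)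

theory Defs
  imports "HOL-Algebra.Algebra" "HOL-Computational_Algebra.Primes"
begin

text \<open>Wreath product A wr B = K \<rtimes> B with K = functions carrier B \<rightarrow> carrier A,
  B acting by (x . alpha)(b) = alpha(x^-1 b).\<close>

definition wreath :: "('a, 'c) monoid_scheme \<Rightarrow> ('b, 'd) monoid_scheme
    \<Rightarrow> (('b \<Rightarrow> 'a) \<times> 'b) monoid" where
  "wreath A B =
     \<lparr> carrier = (carrier B \<rightarrow>\<^sub>E carrier A) \<times> carrier B,
       monoid.mult = (\<lambda>(\<alpha>, x) (\<beta>, y).
                 ((\<lambda>b\<in>carrier B. \<alpha> b \<otimes>\<^bsub>A\<^esub> \<beta> (inv\<^bsub>B\<^esub> x \<otimes>\<^bsub>B\<^esub> b)),
                  x \<otimes>\<^bsub>B\<^esub> y)),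
       one = ((\<lambda>b\<in>carrier B. \<one>\<^bsub>A\<^esub>), \<one>\<^bsub>B\<^esub>) \<rparr>"

definition avg_order :: "('a, 'c) monoid_scheme \<Rightarrow> real" where
  "avg_order G = (\<Sum>g\<in>carrier G. real (group.ord G g)) / real (card (carrier G))"

definition tau :: "nat \<Rightarrow> real" where
  "tau n = (\<Prod>p\<in>prime_factors n. 1 - real p)"

end

theory Submission
  imports Defs
begin


abbreviation nprime :: "nat \<Rightarrow> bool" where "nprime p \<equiv> Factorial_Ring.prime p"


lemma tau_one: "tau 1 = 1" by (simp add: tau_def)
lemma tau_Suc0: "tau (Suc 0) = 1" by (simp add: tau_def)

lemma tau_mult:
  assumes "coprime u v" "u > 0" "v > 0"
  shows "tau (u*v) = tau u * tau v"
proof -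
  have pf: "prime_factors (u*v) = prime_factors u \<union> prime_factors v"
    using assms by (simp add: prime_factors_product)
  have "prime_factors u \<inter> prime_factors v = {}"
  proof (rule ccontr)
    assume "prime_factors u \<inter> prime_factors v \<noteq> {}"
    then obtain p where "p \<in> prime_factors u" "p \<in> prime_factors v" by blast
    then have "nprime p" "p dvd u" "p dvd v" by auto
    then show False using assms(1) by (metis coprime_common_divisor_nat not_prime_1)
  qed
  then show ?thesis unfolding tau_def pf
    by (rule prod.union_disjoint[rotated 2]) auto
qed

lemma tau_prime_power:
  assumes "nprime p" "j > 0"
  shows "tau (p^j) = 1 - real p"
proof -
  have "prime_factors (p^j) = {p}"
    using assms by (simp add: prime_factorization_prime_power)
  then show ?thesis by (simp add: tau_def)
qed

lemma sum_divisors_coprime: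
  fixes a b :: nat
  assumes "coprime a b" "a > 0" "b > 0"
  shows "(\<Sum>d\<in>{d. d dvd a*b}. f d) = (\<Sum>x\<in>{x. x dvd a}. \<Sum>y\<in>{y. y dvd b}. f (x*y))"
proof -
  have inj: "inj_on (\<lambda>(x,y). x*y) ({x. x dvd a} \<times> {y. y dvd b})"
  proof (rule inj_onI, clarsimp)
    fix x y x' y' assume h: "x dvd a" "y dvd b" "x' dvd a" "y' dvd b" "x*y = x'*y'"
    have c1: "coprime x y'" using h assms(1) coprime_divisors by blast
    have c2: "coprime x' y" using h assms(1) coprime_divisors by blast
    have "x dvd x' * y'" using h(5) by (metis dvd_triv_left)
    then have "x dvd x'" using c1 by (simp add: coprime_dvd_mult_left_iff)
    moreover have "x' dvd x * y" using h(5) by (metis dvd_triv_left)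
    then have "x' dvd x" using c2 by (simp add: coprime_dvd_mult_left_iff)
    ultimately have "x = x'" by (simp add: dvd_antisym)
    moreover have "x > 0" using h(1) assms(2) by (metis dvd_0_left_iff gr0I not_gr0)
    ultimately show "x = x' \<and> y = y'" using h(5) by simp
  qed
  have img: "(\<lambda>(x,y). x*y) ` ({x. x dvd a} \<times> {y. y dvd b}) = {d. d dvd a*b}"
  proof
    show "(\<lambda>(x,y). x*y) ` ({x. x dvd a} \<times> {y. y dvd b}) \<subseteq> {d. d dvd a*b}"
      by (auto intro: mult_dvd_mono)
    show "{d. d dvd a*b} \<subseteq> (\<lambda>(x,y). x*y) ` ({x. x dvd a} \<times> {y. y dvd b})"
    proof
      fix d assume "d \<in> {d. d dvd a*b}"
      then obtain x y where "d = x*y" "x dvd a" "y dvd b" by (auto elim: dvd_productE)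
      then show "d \<in> (\<lambda>(x,y). x*y) ` ({x. x dvd a} \<times> {y. y dvd b})" by force
    qed
  qed
  have "(\<Sum>d\<in>{d. d dvd a*b}. f d) = (\<Sum>p\<in>{x. x dvd a} \<times> {y. y dvd b}. f (case p of (x,y) \<Rightarrow> x*y))"
    using sum.reindex[OF inj, of f] img by (simp add: comp_def)
  also have "\<dots> = (\<Sum>x\<in>{x. x dvd a}. \<Sum>y\<in>{y. y dvd b}. f (x*y))"
    by (simp add: sum.cartesian_product split_beta)
  finally show ?thesis .
qed

definition FF :: "nat \<Rightarrow> real" where
  "FF L = (\<Sum>j\<in>{j. j dvd L}. real j * tau (L div j))"

lemma FF_mult:
  assumes "coprime a b" "a > 0" "b > 0"
  shows "FF (a*b) = FF a * FF b"
proof -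
  have "FF (a*b) = (\<Sum>x\<in>{x. x dvd a}. \<Sum>y\<in>{y. y dvd b}. real (x*y) * tau ((a*b) div (x*y)))"
    unfolding FF_def by (rule sum_divisors_coprime[OF assms])
  also have "\<dots> = (\<Sum>x\<in>{x. x dvd a}. \<Sum>y\<in>{y. y dvd b}. (real x * tau (a div x)) * (real y * tau (b div y)))"
  proof (intro sum.cong refl)
    fix x y assume x: "x \<in> {x. x dvd a}" and y: "y \<in> {y. y dvd b}"
    have e: "(a*b) div (x*y) = (a div x) * (b div y)"
      using x y by (simp add: div_mult_div_if_dvd)
    have c: "coprime (a div x) (b div y)"
    proof (rule coprime_divisors[OF _ _ assms(1)])
      show "a div x dvd a" using x by (metis dvd_div_mult_self dvd_triv_left mem_Collect_eq)
      show "b div y dvd b" using y by (metis dvd_div_mult_self dvd_triv_left mem_Collect_eq)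
    qed
    have p1: "a div x > 0" using x assms(2) by (auto elim!: dvdE)
    have p2: "b div y > 0" using y assms(3) by (auto elim!: dvdE)
    show "real (x*y) * tau ((a*b) div (x*y)) = (real x * tau (a div x)) * (real y * tau (b div y))"
      unfolding e tau_mult[OF c p1 p2] by simp
  qed
  also have "\<dots> = FF a * FF b"
    unfolding FF_def by (simp add: sum_product)
  finally show ?thesis .
qed

lemma FF_prime_power:
  assumes p: "nprime p"
  shows "FF (p^a) = 1"
proof -
  have inj: "inj_on (\<lambda>i. p^i) {..a}"
  proof (rule inj_onI)
    fix x y assume "p^x = p^y" then show "x = y" using prime_gt_1_nat[OF p] by simp
  qed
  have img: "(\<lambda>i. p^i) ` {..a} = {j. j dvd p^a}"
    using divides_primepow_nat[OF p] by auto
  have "FF (p^a) = (\<Sum>i\<in>{..a}. real (p^i) * tau (p^a div p^i))"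
    unfolding FF_def img[symmetric] by (simp add: sum.reindex[OF inj])
  also have "\<dots> = (\<Sum>i\<in>{..a}. real p^i * tau (p^(a-i)))"
    using p by (intro sum.cong refl) (simp add: power_diff prime_gt_0_nat)
  also have "\<dots> = (\<Sum>i<a. real p^i * (1 - real p)) + real p ^ a"
    using p by (simp add: lessThan_Suc_atMost[symmetric] tau_prime_power tau_Suc0)
  also have "(\<Sum>i<a. real p^i * (1 - real p)) = 1 - real p ^ a"
    by (induction a) (auto simp: algebra_simps)
  finally show ?thesis by simp
qed

lemma FF_one: "L > 0 \<Longrightarrow> FF L = 1"
proof (induction L rule: less_induct)
  case (less L)
  show ?case
  proof (cases "L = 1")
    case True
    then show ?thesis by (simp add: FF_def tau_def)
  next
    case False
    then obtain p where p: "nprime p" "p dvd L" using prime_factor_nat by blast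
    define a where "a = multiplicity p L"
    have "L \<noteq> 0" "\<not> is_unit p" using less.prems p not_prime_unit by auto
    note hh = this
    obtain y where y: "L = p^a * y" "\<not> p dvd y"
      unfolding a_def by (rule multiplicity_decompose'[OF hh])
    have a0: "a > 0" unfolding a_def using p by (simp add: multiplicity_gt_zero_iff[OF hh])
    have y0: "y > 0" using y less.prems by (auto intro: gr0I)
    have c: "coprime (p^a) y"
      using p y(2) by (simp add: prime_imp_coprime)
    have "p \<le> p^a" using p a0 by (intro self_le_power) (use prime_gt_0_nat[OF p(1)] in auto)
    then have "p^a \<ge> 2" using prime_ge_2_nat[OF p(1)] by linarith
    then have "1 * y < p^a * y" using y0 by (intro mult_strict_right_mono) auto
    then have "y < L" using y(1) by simp
    then have "FF y = 1" using less.IH y0 by blast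
    then show ?thesis using y(1) FF_mult[OF c _ y0] FF_prime_power[OF p(1)] p(1)
      by (simp add: prime_gt_0_nat)
  qed
qed

lemma tau_sum_above:
  assumes "L dvd M" "M > 0"
  shows "(\<Sum>m\<in>{m. m dvd M \<and> L dvd m}. real m * tau (M div m)) = real L"
proof -
  have L0: "L > 0" using assms by (auto intro: gr0I)
  obtain K where K: "M = L * K" using assms(1) by (auto elim: dvdE)
  have K0: "K > 0" using K assms(2) by (auto intro: gr0I)
  have inj: "inj_on (\<lambda>j. L*j) {j. j dvd K}" using L0 by (auto intro: inj_onI)
  have img: "(\<lambda>j. L*j) ` {j. j dvd K} = {m. m dvd M \<and> L dvd m}"
  proof
    show "(\<lambda>j. L*j) ` {j. j dvd K} \<subseteq> {m. m dvd M \<and> L dvd m}"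
      using K by (auto intro: mult_dvd_mono)
    show "{m. m dvd M \<and> L dvd m} \<subseteq> (\<lambda>j. L*j) ` {j. j dvd K}"
    proof
      fix m assume "m \<in> {m. m dvd M \<and> L dvd m}"
      then have m: "m dvd M" "L dvd m" by auto
      from m(2) obtain j where j: "m = L*j" by (auto simp: dvd_def)
      have "L*j dvd L*K" using m(1) j K by simp
      then have "j dvd K" using L0 by simp
      then show "m \<in> (\<lambda>j. L*j) ` {j. j dvd K}" using j by blast
    qed
  qed
  have "(\<Sum>m\<in>{m. m dvd M \<and> L dvd m}. real m * tau (M div m)) = (\<Sum>j\<in>{j. j dvd K}. real (L*j) * tau (M div (L*j)))"
    unfolding img[symmetric] by (simp add: sum.reindex[OF inj])
  also have "\<dots> = real L * (\<Sum>j\<in>{j. j dvd K}. real j * tau (K div j))"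
    using K L0 by (simp add: sum_distrib_left mult.assoc)
  also have "\<dots> = real L" using FF_one[OF K0] by (simp add: FF_def)
  finally show ?thesis .
qed



lemma sum_PiE_restrict:
  fixes f :: "('i \<Rightarrow> 'g) \<Rightarrow> real"
  assumes "finite R" "finite D" "R \<inter> D = {}"
  shows "(\<Sum>\<alpha>\<in>PiE (R \<union> D) (\<lambda>_. G). f (restrict \<alpha> R)) = real (card G ^ card D) * (\<Sum>a\<in>PiE R (\<lambda>_. G). f a)"
  using assms(2,3)
proof (induction D rule: finite_induct)
  case empty
  show ?case by (simp add: PiE_restrict)
next
  case (insert i D)
  have iR: "i \<notin> R" "i \<notin> R \<union> D" using insert by auto
  have e: "R \<union> insert i D = insert i (R \<union> D)" by auto
  have "(\<Sum>\<alpha>\<in>PiE (R \<union> insert i D) (\<lambda>_. G). f (restrict \<alpha> R))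
      = (\<Sum>p\<in>G \<times> PiE (R \<union> D) (\<lambda>_. G). f (restrict ((\<lambda>(y, g). g(i := y)) p) R))"
    unfolding e PiE_insert_eq
    by (subst sum.reindex[OF inj_combinator[OF iR(2)]]) (simp add: comp_def)
  also have "\<dots> = (\<Sum>p\<in>G \<times> PiE (R \<union> D) (\<lambda>_. G). f (restrict (snd p) R))"
  proof (intro sum.cong refl)
    fix p assume "p \<in> G \<times> PiE (R \<union> D) (\<lambda>_. G)"
    have "restrict ((\<lambda>(y, g). g(i := y)) p) R = restrict (snd p) R"
      using iR(1) by (cases p) (auto simp: restrict_def fun_eq_iff)
    then show "f (restrict ((\<lambda>(y, g). g(i := y)) p) R) = f (restrict (snd p) R)" by simp
  qed
  also have "\<dots> = (\<Sum>y\<in>G. \<Sum>g\<in>PiE (R \<union> D) (\<lambda>_. G). f (restrict g R))"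
    using sum.cartesian_product[where A=G and g="\<lambda>y g. f (restrict g R)" and B="PiE (R \<union> D) (\<lambda>_. G)", unfolded split_def]
    by simp
  also have "\<dots> = real (card G) * (\<Sum>g\<in>PiE (R \<union> D) (\<lambda>_. G). f (restrict g R))"
    by simp
  also have "(\<Sum>g\<in>PiE (R \<union> D) (\<lambda>_. G). f (restrict g R)) = real (card G ^ card D) * (\<Sum>a\<in>PiE R (\<lambda>_. G). f a)"
    using insert.IH insert.prems by blast
  also have "real (card G) * (real (card G ^ card D) * (\<Sum>a\<in>PiE R (\<lambda>_. G). f a)) = real (card G ^ card (insert i D)) * (\<Sum>a\<in>PiE R (\<lambda>_. G). f a)"
    using insert.hyps by simp
  finally show ?case .
qed

lemma (in group) sum_Lcm_PiE:
  assumes fin: "finite (carrier G)" and finR: "finite R"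
  shows "(\<Sum>a\<in>PiE R (\<lambda>_. carrier G). real (Lcm ((\<lambda>r. ord (a r)) ` R)))
    = (\<Sum>m\<in>{m. m dvd order G}. real m * tau (order G div m) * real (card {g\<in>carrier G. g [^] m = \<one>}) ^ card R)"
proof -
  define M where "M = order G"
  have M0: "M > 0" unfolding M_def using fin by (simp add: order_gt_0_iff_finite)
  have finD: "finite {m. m dvd M}" using M0 by simp
  define c where "c m = real m * tau (M div m)" for m
  have "(\<Sum>a\<in>PiE R (\<lambda>_. carrier G). real (Lcm ((\<lambda>r. ord (a r)) ` R)))
      = (\<Sum>a\<in>PiE R (\<lambda>_. carrier G). \<Sum>m\<in>{m. m dvd M}. if Lcm ((\<lambda>r. ord (a r)) ` R) dvd m then c m else 0)"
  proof (intro sum.cong refl)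
    fix a assume a: "a \<in> PiE R (\<lambda>_. carrier G)"
    define L where "L = Lcm ((\<lambda>r. ord (a r)) ` R)"
    have "L dvd M" unfolding L_def M_def Lcm_dvd_iff
      using a by (auto intro: ord_dvd_group_order)
    then have "real L = (\<Sum>m\<in>{m. m dvd M \<and> L dvd m}. c m)"
      unfolding c_def using tau_sum_above M0 by simp
    also have "\<dots> = (\<Sum>m\<in>{m. m dvd M}. if L dvd m then c m else 0)"
      using sum.inter_filter[OF finD, of c "\<lambda>m. L dvd m"] by simp
    finally show "real L = (\<Sum>m\<in>{m. m dvd M}. if L dvd m then c m else 0)" .
  qed
  also have "\<dots> = (\<Sum>m\<in>{m. m dvd M}. \<Sum>a\<in>PiE R (\<lambda>_. carrier G). if Lcm ((\<lambda>r. ord (a r)) ` R) dvd m then c m else 0)"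
    by (rule sum.swap)
  also have "\<dots> = (\<Sum>m\<in>{m. m dvd M}. c m * real (card {g\<in>carrier G. g [^] m = \<one>}) ^ card R)"
  proof (intro sum.cong refl)
    fix m
    have fP: "finite (PiE R (\<lambda>_. carrier G))" using fin finR by (simp add: finite_PiE)
    have st: "{a\<in>PiE R (\<lambda>_. carrier G). Lcm ((\<lambda>r. ord (a r)) ` R) dvd m} = PiE R (\<lambda>_. {g\<in>carrier G. g [^] m = \<one>})"
    proof (rule Set.set_eqI)
      fix a
      have "a \<in> PiE R (\<lambda>_. {g\<in>carrier G. g [^] m = \<one>}) \<longleftrightarrow>
          a \<in> PiE R (\<lambda>_. carrier G) \<and> (\<forall>r\<in>R. a r [^] m = \<one>)"
        by (auto simp: PiE_iff)
      also have "\<dots> \<longleftrightarrow> a \<in> PiE R (\<lambda>_. carrier G) \<and> (\<forall>r\<in>R. ord (a r) dvd m)"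
      proof (cases "a \<in> PiE R (\<lambda>_. carrier G)")
        case True
        then have "\<forall>r\<in>R. a r \<in> carrier G" by (auto simp: PiE_iff)
        then show ?thesis using True pow_eq_id by auto
      qed simp
      finally show "a \<in> {a\<in>PiE R (\<lambda>_. carrier G). Lcm ((\<lambda>r. ord (a r)) ` R) dvd m} \<longleftrightarrow>
          a \<in> PiE R (\<lambda>_. {g\<in>carrier G. g [^] m = \<one>})"
        by (simp add: Lcm_dvd_iff)
    qed
    have "(\<Sum>a\<in>PiE R (\<lambda>_. carrier G). if Lcm ((\<lambda>r. ord (a r)) ` R) dvd m then c m else 0)
        = (\<Sum>a\<in>{a\<in>PiE R (\<lambda>_. carrier G). Lcm ((\<lambda>r. ord (a r)) ` R) dvd m}. c m)"
      using sum.inter_filter[OF fP, of "\<lambda>_. c m"] by simp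
    also have "\<dots> = c m * real (card {g\<in>carrier G. g [^] m = \<one>}) ^ card R"
      unfolding st using finR by (simp add: card_PiE mult.commute)
    finally show "(\<Sum>a\<in>PiE R (\<lambda>_. carrier G). if Lcm ((\<lambda>r. ord (a r)) ` R) dvd m then c m else 0)
        = c m * real (card {g\<in>carrier G. g [^] m = \<one>}) ^ card R" .
  qed
  finally show ?thesis unfolding c_def M_def .
qed



lemma (in group) ord_swap:
  assumes u: "u \<in> carrier G" and v: "v \<in> carrier G"
  shows "ord (v \<otimes> u) = ord (u \<otimes> v)"
proof -
  have conj: "(v \<otimes> u) [^] n = inv u \<otimes> (u \<otimes> v) [^] n \<otimes> u" for n :: nat
  proof (induction n)
    case 0
    then show ?case using u by simp
  next
    case (Suc n)
    have "(v \<otimes> u) [^] Suc n = (inv u \<otimes> (u \<otimes> v) [^] n \<otimes> u) \<otimes> (v \<otimes> u)"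
      using Suc by simp
    also have "\<dots> = inv u \<otimes> ((u \<otimes> v) [^] n \<otimes> (u \<otimes> v)) \<otimes> u"
      using u v by (simp add: m_assoc)
    also have "\<dots> = inv u \<otimes> (u \<otimes> v) [^] Suc n \<otimes> u" by simp
    finally show ?case .
  qed
  have iff: "(v \<otimes> u) [^] n = \<one> \<longleftrightarrow> (u \<otimes> v) [^] n = \<one>" for n :: nat
  proof -
    have "inv u \<otimes> (u \<otimes> v) [^] n \<otimes> u = \<one> \<longleftrightarrow> (u \<otimes> v) [^] n = \<one>"
    proof
      assume h: "inv u \<otimes> (u \<otimes> v) [^] n \<otimes> u = \<one>"
      have "(u \<otimes> v) [^] n = u \<otimes> (inv u \<otimes> (u \<otimes> v) [^] n \<otimes> u) \<otimes> inv u"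
        using u v by (simp add: m_assoc[symmetric]) (simp add: m_assoc)
      also have "\<dots> = \<one>" using h u by simp
      finally show "(u \<otimes> v) [^] n = \<one>" .
    next
      assume "(u \<otimes> v) [^] n = \<one>"
      then show "inv u \<otimes> (u \<otimes> v) [^] n \<otimes> u = \<one>" using u by simp
    qed
    then show ?thesis using conj by simp
  qed
  show ?thesis
    using u v by (simp add: ord_unique iff pow_eq_id)
qed

fun cyc :: "('a, 'c) monoid_scheme \<Rightarrow> ('b, 'd) monoid_scheme \<Rightarrow> ('b \<Rightarrow> 'a) \<Rightarrow> 'b \<Rightarrow> nat \<Rightarrow> 'b \<Rightarrow> 'a" where
  "cyc A B \<alpha> x 0 b = \<one>\<^bsub>A\<^esub>"
| "cyc A B \<alpha> x (Suc n) b = cyc A B \<alpha> x n b \<otimes>\<^bsub>A\<^esub> \<alpha> ((inv\<^bsub>B\<^esub> x) [^]\<^bsub>B\<^esub> n \<otimes>\<^bsub>B\<^esub> b)"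

locale wr_setup =
  GA: group A + GB: group B
  for A :: "('a, 'c) monoid_scheme" and B :: "('b, 'd) monoid_scheme" +
  assumes finA: "finite (carrier A)" and finB: "finite (carrier B)"
begin

lemma W_carrier: "carrier (wreath A B) = (carrier B \<rightarrow>\<^sub>E carrier A) \<times> carrier B"
  by (simp add: wreath_def)

lemma W_mult: "(\<alpha>, x) \<otimes>\<^bsub>wreath A B\<^esub> (\<beta>, y) =
   ((\<lambda>b\<in>carrier B. \<alpha> b \<otimes>\<^bsub>A\<^esub> \<beta> (inv\<^bsub>B\<^esub> x \<otimes>\<^bsub>B\<^esub> b)), x \<otimes>\<^bsub>B\<^esub> y)"
  by (simp add: wreath_def)

lemma W_one: "\<one>\<^bsub>wreath A B\<^esub> = ((\<lambda>b\<in>carrier B. \<one>\<^bsub>A\<^esub>), \<one>\<^bsub>B\<^esub>)"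
  by (simp add: wreath_def)

lemma W_group: "group (wreath A B)"
proof (rule groupI)
  fix u v assume "u \<in> carrier (wreath A B)" "v \<in> carrier (wreath A B)"
  then show "u \<otimes>\<^bsub>wreath A B\<^esub> v \<in> carrier (wreath A B)"
    by (cases u, cases v) (auto simp: W_carrier W_mult PiE_iff)
next
  show "\<one>\<^bsub>wreath A B\<^esub> \<in> carrier (wreath A B)" by (auto simp: W_carrier W_one)
next
  fix u v w assume h: "u \<in> carrier (wreath A B)" "v \<in> carrier (wreath A B)" "w \<in> carrier (wreath A B)"
  obtain \<alpha> x where u: "u = (\<alpha>, x)" by (cases u)
  obtain \<beta> y where v: "v = (\<beta>, y)" by (cases v)
  obtain \<gamma> z where w: "w = (\<gamma>, z)" by (cases w)
  have hh: "\<alpha> \<in> carrier B \<rightarrow>\<^sub>E carrier A" "x \<in> carrier B" "\<beta> \<in> carrier B \<rightarrow>\<^sub>E carrier A" "y \<in> carrier B"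
      "\<gamma> \<in> carrier B \<rightarrow>\<^sub>E carrier A" "z \<in> carrier B"
    using h u v w by (auto simp: W_carrier)
  have "(\<lambda>b\<in>carrier B. (\<lambda>c\<in>carrier B. \<alpha> c \<otimes>\<^bsub>A\<^esub> \<beta> (inv\<^bsub>B\<^esub> x \<otimes>\<^bsub>B\<^esub> c)) b \<otimes>\<^bsub>A\<^esub> \<gamma> (inv\<^bsub>B\<^esub> (x \<otimes>\<^bsub>B\<^esub> y) \<otimes>\<^bsub>B\<^esub> b))
      = (\<lambda>b\<in>carrier B. \<alpha> b \<otimes>\<^bsub>A\<^esub> (\<lambda>c\<in>carrier B. \<beta> c \<otimes>\<^bsub>A\<^esub> \<gamma> (inv\<^bsub>B\<^esub> y \<otimes>\<^bsub>B\<^esub> c)) (inv\<^bsub>B\<^esub> x \<otimes>\<^bsub>B\<^esub> b))"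
  proof (rule restrict_ext)
    fix b assume b: "b \<in> carrier B"
    have "inv\<^bsub>B\<^esub> (x \<otimes>\<^bsub>B\<^esub> y) \<otimes>\<^bsub>B\<^esub> b = inv\<^bsub>B\<^esub> y \<otimes>\<^bsub>B\<^esub> (inv\<^bsub>B\<^esub> x \<otimes>\<^bsub>B\<^esub> b)"
      using hh b by (simp add: GB.inv_mult_group GB.m_assoc)
    moreover have "\<alpha> b \<in> carrier A" "\<beta> (inv\<^bsub>B\<^esub> x \<otimes>\<^bsub>B\<^esub> b) \<in> carrier A"
        "\<gamma> (inv\<^bsub>B\<^esub> y \<otimes>\<^bsub>B\<^esub> (inv\<^bsub>B\<^esub> x \<otimes>\<^bsub>B\<^esub> b)) \<in> carrier A"
      using hh b by (auto simp: PiE_iff)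
    ultimately show "(\<lambda>c\<in>carrier B. \<alpha> c \<otimes>\<^bsub>A\<^esub> \<beta> (inv\<^bsub>B\<^esub> x \<otimes>\<^bsub>B\<^esub> c)) b \<otimes>\<^bsub>A\<^esub> \<gamma> (inv\<^bsub>B\<^esub> (x \<otimes>\<^bsub>B\<^esub> y) \<otimes>\<^bsub>B\<^esub> b)
      = \<alpha> b \<otimes>\<^bsub>A\<^esub> (\<lambda>c\<in>carrier B. \<beta> c \<otimes>\<^bsub>A\<^esub> \<gamma> (inv\<^bsub>B\<^esub> y \<otimes>\<^bsub>B\<^esub> c)) (inv\<^bsub>B\<^esub> x \<otimes>\<^bsub>B\<^esub> b)"
      using hh b by (simp add: GA.m_assoc)
  qed
  then show "u \<otimes>\<^bsub>wreath A B\<^esub> v \<otimes>\<^bsub>wreath A B\<^esub> w = u \<otimes>\<^bsub>wreath A B\<^esub> (v \<otimes>\<^bsub>wreath A B\<^esub> w)"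
    using hh by (simp add: u v w W_mult GB.m_assoc)
next
  fix u assume h: "u \<in> carrier (wreath A B)"
  obtain \<alpha> x where u: "u = (\<alpha>, x)" by (cases u)
  have hh: "\<alpha> \<in> carrier B \<rightarrow>\<^sub>E carrier A" "x \<in> carrier B" using h u by (auto simp: W_carrier)
  have "(\<lambda>b\<in>carrier B. (\<lambda>c\<in>carrier B. \<one>\<^bsub>A\<^esub>) b \<otimes>\<^bsub>A\<^esub> \<alpha> (inv\<^bsub>B\<^esub> \<one>\<^bsub>B\<^esub> \<otimes>\<^bsub>B\<^esub> b)) = \<alpha>"
  proof -
    have "(\<lambda>b\<in>carrier B. (\<lambda>c\<in>carrier B. \<one>\<^bsub>A\<^esub>) b \<otimes>\<^bsub>A\<^esub> \<alpha> (inv\<^bsub>B\<^esub> \<one>\<^bsub>B\<^esub> \<otimes>\<^bsub>B\<^esub> b)) = (\<lambda>b\<in>carrier B. \<alpha> b)"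
      using hh by (intro restrict_ext) (auto simp: PiE_iff)
    also have "\<dots> = \<alpha>" using hh by (simp add: PiE_restrict)
    finally show ?thesis .
  qed
  then show "\<one>\<^bsub>wreath A B\<^esub> \<otimes>\<^bsub>wreath A B\<^esub> u = u"
    using hh by (simp add: u W_one W_mult)
  define \<beta> where "\<beta> = (\<lambda>b\<in>carrier B. inv\<^bsub>A\<^esub> (\<alpha> (x \<otimes>\<^bsub>B\<^esub> b)))"
  have "(\<beta>, inv\<^bsub>B\<^esub> x) \<in> carrier (wreath A B)"
    using hh by (auto simp: W_carrier \<beta>_def PiE_iff)
  moreover have "(\<beta>, inv\<^bsub>B\<^esub> x) \<otimes>\<^bsub>wreath A B\<^esub> u = \<one>\<^bsub>wreath A B\<^esub>"
  proof -
    have "(\<lambda>b\<in>carrier B. \<beta> b \<otimes>\<^bsub>A\<^esub> \<alpha> (inv\<^bsub>B\<^esub> (inv\<^bsub>B\<^esub> x) \<otimes>\<^bsub>B\<^esub> b)) = (\<lambda>b\<in>carrier B. \<one>\<^bsub>A\<^esub>)"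
      using hh by (intro restrict_ext) (auto simp: \<beta>_def PiE_iff)
    then show ?thesis using hh by (simp add: u W_mult W_one)
  qed
  ultimately show "\<exists>y\<in>carrier (wreath A B). y \<otimes>\<^bsub>wreath A B\<^esub> u = \<one>\<^bsub>wreath A B\<^esub>" by blast
qed

sublocale GW: group "wreath A B" by (rule W_group)

abbreviation "H \<equiv> carrier B"
abbreviation "P \<equiv> cyc A B"

lemma cyc_closed:
  assumes "\<alpha> \<in> H \<rightarrow>\<^sub>E carrier A" "x \<in> H" "b \<in> H"
  shows "P \<alpha> x n b \<in> carrier A"
  using assms by (induction n) (auto simp: PiE_iff)

lemma W_pow:
  assumes a: "\<alpha> \<in> H \<rightarrow>\<^sub>E carrier A" and x: "x \<in> H"
  shows "(\<alpha>, x) [^]\<^bsub>wreath A B\<^esub> n = ((\<lambda>b\<in>H. P \<alpha> x n b), x [^]\<^bsub>B\<^esub> n)"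
proof (induction n)
  case 0
  then show ?case by (simp add: W_one restrict_def)
next
  case (Suc n)
  have "(\<alpha>, x) [^]\<^bsub>wreath A B\<^esub> Suc n = ((\<lambda>b\<in>H. P \<alpha> x n b), x [^]\<^bsub>B\<^esub> n) \<otimes>\<^bsub>wreath A B\<^esub> (\<alpha>, x)"
    by (simp only: GW.nat_pow_Suc Suc.IH)
  also have "\<dots> = ((\<lambda>b\<in>H. P \<alpha> x (Suc n) b), x [^]\<^bsub>B\<^esub> Suc n)"
    unfolding W_mult using x by (auto intro!: restrict_ext simp: GB.nat_pow_inv)
  finally show ?case .
qed

lemma cyc_add:
  assumes a: "\<alpha> \<in> H \<rightarrow>\<^sub>E carrier A" and x: "x \<in> H" and b: "b \<in> H"
  shows "P \<alpha> x (n + m) b = P \<alpha> x n b \<otimes>\<^bsub>A\<^esub> P \<alpha> x m ((inv\<^bsub>B\<^esub> x) [^]\<^bsub>B\<^esub> n \<otimes>\<^bsub>B\<^esub> b)"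
proof (induction m)
  case 0
  then show ?case using cyc_closed[OF a x b] by simp
next
  case (Suc m)
  have e: "(inv\<^bsub>B\<^esub> x) [^]\<^bsub>B\<^esub> m \<otimes>\<^bsub>B\<^esub> ((inv\<^bsub>B\<^esub> x) [^]\<^bsub>B\<^esub> n \<otimes>\<^bsub>B\<^esub> b) = (inv\<^bsub>B\<^esub> x) [^]\<^bsub>B\<^esub> (n + m) \<otimes>\<^bsub>B\<^esub> b"
    using x b by (simp add: GB.m_assoc[symmetric] GB.nat_pow_mult add.commute)
  have c: "(inv\<^bsub>B\<^esub> x) [^]\<^bsub>B\<^esub> n \<otimes>\<^bsub>B\<^esub> b \<in> H" using x b by simp
  have "P \<alpha> x (n + Suc m) b = P \<alpha> x n b \<otimes>\<^bsub>A\<^esub> P \<alpha> x m ((inv\<^bsub>B\<^esub> x) [^]\<^bsub>B\<^esub> n \<otimes>\<^bsub>B\<^esub> b) \<otimes>\<^bsub>A\<^esub> \<alpha> ((inv\<^bsub>B\<^esub> x) [^]\<^bsub>B\<^esub> (n + m) \<otimes>\<^bsub>B\<^esub> b)"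
    using Suc by simp
  also have "\<dots> = P \<alpha> x n b \<otimes>\<^bsub>A\<^esub> P \<alpha> x (Suc m) ((inv\<^bsub>B\<^esub> x) [^]\<^bsub>B\<^esub> n \<otimes>\<^bsub>B\<^esub> b)"
    using cyc_closed[OF a x b] cyc_closed[OF a x c] a x b
    by (simp add: e GA.m_assoc PiE_iff)
  finally show ?case .
qed

lemma inv_pow_ord: "x \<in> H \<Longrightarrow> (inv\<^bsub>B\<^esub> x) [^]\<^bsub>B\<^esub> (GB.ord x * t) = \<one>\<^bsub>B\<^esub>"
  by (simp add: GB.nat_pow_inv GB.nat_pow_pow[symmetric])

lemma cyc_ord_mult:
  assumes a: "\<alpha> \<in> H \<rightarrow>\<^sub>E carrier A" and x: "x \<in> H" and b: "b \<in> H"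
  shows "P \<alpha> x (GB.ord x * t) b = (P \<alpha> x (GB.ord x) b) [^]\<^bsub>A\<^esub> t"
proof (induction t)
  case 0
  then show ?case by simp
next
  case (Suc t)
  have "P \<alpha> x (GB.ord x * Suc t) b = P \<alpha> x (GB.ord x * t + GB.ord x) b" by (simp add: add.commute)
  also have "\<dots> = P \<alpha> x (GB.ord x * t) b \<otimes>\<^bsub>A\<^esub> P \<alpha> x (GB.ord x) b"
    using cyc_add[OF a x b] inv_pow_ord[OF x] b by simp
  finally show ?case using Suc by simp
qed

lemma restrict_eq_iff: "((\<lambda>b\<in>S. f b) = (\<lambda>b\<in>S. g b)) \<longleftrightarrow> (\<forall>b\<in>S. f b = g b)"
  by (metis restrict_apply' restrict_ext)

lemma ord_W:
  assumes a: "\<alpha> \<in> H \<rightarrow>\<^sub>E carrier A" and x: "x \<in> H"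
  shows "GW.ord (\<alpha>, x) = GB.ord x * Lcm ((\<lambda>b. GA.ord (P \<alpha> x (GB.ord x) b)) ` H)"
proof -
  define k where "k = GB.ord x"
  define L where "L = Lcm ((\<lambda>b. GA.ord (P \<alpha> x k b)) ` H)"
  have k0: "k > 0" unfolding k_def using GB.ord_ge_1[OF finB x] by simp
  have inW: "(\<alpha>, x) \<in> carrier (wreath A B)" using a x by (simp add: W_carrier)
  have "(\<alpha>, x) [^]\<^bsub>wreath A B\<^esub> n = \<one>\<^bsub>wreath A B\<^esub> \<longleftrightarrow> k * L dvd n" for n
  proof -
    have "(\<alpha>, x) [^]\<^bsub>wreath A B\<^esub> n = \<one>\<^bsub>wreath A B\<^esub> \<longleftrightarrow> (\<forall>b\<in>H. P \<alpha> x n b = \<one>\<^bsub>A\<^esub>) \<and> k dvd n"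
      unfolding W_pow[OF a x] W_one k_def using x by (auto simp: restrict_eq_iff GB.pow_eq_id)
    also have "\<dots> \<longleftrightarrow> k * L dvd n"
    proof
      assume h: "(\<forall>b\<in>H. P \<alpha> x n b = \<one>\<^bsub>A\<^esub>) \<and> k dvd n"
      then obtain t where t: "n = k * t" by (auto elim: dvdE)
      have "\<forall>b\<in>H. GA.ord (P \<alpha> x k b) dvd t"
        using h t cyc_ord_mult[OF a x] cyc_closed[OF a x] unfolding k_def
        by (auto simp: GA.pow_eq_id[symmetric])
      then have "L dvd t" unfolding L_def by (simp add: Lcm_dvd_iff)
      then show "k * L dvd n" using t by simp
    next
      assume h: "k * L dvd n"
      then obtain t where t: "n = k * (L * t)" by (metis dvd_def mult.assoc)
      have "P \<alpha> x n b = \<one>\<^bsub>A\<^esub>" if b: "b \<in> H" for b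
      proof -
        have "GA.ord (P \<alpha> x k b) dvd L" unfolding L_def using b by (auto intro: dvd_Lcm)
        then have "GA.ord (P \<alpha> x k b) dvd L * t" by simp
        then show ?thesis
          using t cyc_ord_mult[OF a x b] cyc_closed[OF a x b] unfolding k_def
          by (simp add: GA.pow_eq_id)
      qed
      then show "(\<forall>b\<in>H. P \<alpha> x n b = \<one>\<^bsub>A\<^esub>) \<and> k dvd n" using t by simp
    qed
    finally show ?thesis .
  qed
  then have "GW.ord (\<alpha>, x) = k * L" using GW.ord_unique[OF inW] by blast
  then show ?thesis unfolding k_def L_def .
qed

end


definition rep :: "'b set \<Rightarrow> 'b" where "rep C = (SOME c. c \<in> C)"

context wr_setup begin

definition reps :: "'b \<Rightarrow> 'b set" where
  "reps x = rep ` RCOSETS B (generate B {x})"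

context
  fixes x assumes x: "x \<in> H"
begin

lemma K_sub: "subgroup (generate B {x}) B"
  using GB.generate_is_subgroup x by auto

lemma ord_x_pos: "GB.ord x > 0"
  using GB.ord_ge_1[OF finB x] by simp

lemma K_elems: "generate B {x} = {x [^]\<^bsub>B\<^esub> i | i::nat. True}"
  using GB.generate_pow_nat[OF x] ord_x_pos by simp

lemma K_invpow: "(inv\<^bsub>B\<^esub> x) [^]\<^bsub>B\<^esub> (i::nat) \<in> generate B {x}"
proof -
  have "x [^]\<^bsub>B\<^esub> i \<in> generate B {x}" using K_elems by blast
  then have "inv\<^bsub>B\<^esub> (x [^]\<^bsub>B\<^esub> i) \<in> generate B {x}"
    by (rule subgroup.m_inv_closed[OF K_sub])
  then show ?thesis using x by (simp add: GB.nat_pow_inv)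
qed

lemma coset_props:
  assumes C: "C \<in> RCOSETS B (generate B {x})"
  shows "rep C \<in> C" "C = generate B {x} #>\<^bsub>B\<^esub> rep C" "rep C \<in> H"
proof -
  obtain a where a: "a \<in> H" "C = generate B {x} #>\<^bsub>B\<^esub> a"
    using C unfolding RCOSETS_def by auto
  have "a \<in> C" using a GB.rcos_self[OF a(1) K_sub] by simp
  then show r: "rep C \<in> C" unfolding rep_def by (rule someI)
  then show "C = generate B {x} #>\<^bsub>B\<^esub> rep C"
    using a GB.repr_independence[OF _ a(1) K_sub] by simp
  show "rep C \<in> H" using r a subgroup.elemrcos_carrier[OF K_sub GB.is_group a(1)] by simp
qed

lemma reps_sub: "reps x \<subseteq> H"
  unfolding reps_def using coset_props(3) by auto

lemma rep_of_rep:
  assumes r: "r \<in> reps x"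
  shows "rep (generate B {x} #>\<^bsub>B\<^esub> r) = r"
proof -
  obtain C where C: "C \<in> RCOSETS B (generate B {x})" "r = rep C" using r unfolding reps_def by auto
  have "generate B {x} #>\<^bsub>B\<^esub> r = C" using coset_props(2)[OF C(1)] C(2) by simp
  then show ?thesis using C(2) by simp
qed

lemma inj_rep: "inj_on rep (RCOSETS B (generate B {x}))"
proof (rule inj_onI)
  fix C1 C2 assume C1: "C1 \<in> RCOSETS B (generate B {x})" and C2: "C2 \<in> RCOSETS B (generate B {x})"
    and e: "rep C1 = rep C2"
  have "C1 = generate B {x} #>\<^bsub>B\<^esub> rep C1" by (rule coset_props(2)[OF C1])
  also have "\<dots> = generate B {x} #>\<^bsub>B\<^esub> rep C2" by (simp only: e)
  also have "\<dots> = C2" by (rule coset_props(2)[OF C2, symmetric])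
  finally show "C1 = C2" .
qed

lemma card_reps: "card (reps x) * GB.ord x = card H"
proof -
  have "card (reps x) = card (RCOSETS B (generate B {x}))"
    unfolding reps_def using inj_rep by (rule card_image)
  moreover have "card (RCOSETS B (generate B {x})) * card (generate B {x}) = order B"
    using GB.lagrange[OF K_sub] .
  ultimately show ?thesis using GB.generate_pow_card[OF x] by (simp add: order_def)
qed

lemma reps_cover:
  assumes b: "b \<in> H"
  shows "\<exists>r\<in>reps x. \<exists>i::nat. b = x [^]\<^bsub>B\<^esub> i \<otimes>\<^bsub>B\<^esub> r"
proof -
  define C where "C = generate B {x} #>\<^bsub>B\<^esub> b"
  have C: "C \<in> RCOSETS B (generate B {x})"
    unfolding C_def using b K_sub by (intro GB.rcosetsI) (auto dest: subgroup.subset)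
  define r where "r = rep C"
  have r: "r \<in> reps x" unfolding r_def reps_def using C by blast
  have bC: "b \<in> C" using GB.rcos_self[OF b K_sub] unfolding C_def .
  have "C = generate B {x} #>\<^bsub>B\<^esub> r" unfolding r_def by (rule coset_props(2)[OF C])
  then have "b \<in> generate B {x} #>\<^bsub>B\<^esub> r" using bC by simp
  then obtain h where h: "h \<in> generate B {x}" "b = h \<otimes>\<^bsub>B\<^esub> r" unfolding r_coset_def by auto
  then obtain i where "h = x [^]\<^bsub>B\<^esub> (i::nat)" using K_elems by auto
  then show ?thesis using r h by blast
qed

lemma reps_sep:
  assumes r: "r \<in> reps x" and i: "0 < i" "i < GB.ord x"
  shows "(inv\<^bsub>B\<^esub> x) [^]\<^bsub>B\<^esub> i \<otimes>\<^bsub>B\<^esub> r \<notin> reps x"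
proof
  assume r': "(inv\<^bsub>B\<^esub> x) [^]\<^bsub>B\<^esub> i \<otimes>\<^bsub>B\<^esub> r \<in> reps x"
  have rH: "r \<in> H" using r reps_sub by auto
  have "(inv\<^bsub>B\<^esub> x) [^]\<^bsub>B\<^esub> i \<otimes>\<^bsub>B\<^esub> r \<in> generate B {x} #>\<^bsub>B\<^esub> r"
    unfolding r_coset_def using K_invpow by auto
  then have "generate B {x} #>\<^bsub>B\<^esub> r = generate B {x} #>\<^bsub>B\<^esub> ((inv\<^bsub>B\<^esub> x) [^]\<^bsub>B\<^esub> i \<otimes>\<^bsub>B\<^esub> r)"
    using GB.repr_independence[OF _ rH K_sub] by simp
  then have "r = (inv\<^bsub>B\<^esub> x) [^]\<^bsub>B\<^esub> i \<otimes>\<^bsub>B\<^esub> r"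
    using rep_of_rep[OF r] rep_of_rep[OF r'] by metis
  then have "(inv\<^bsub>B\<^esub> x) [^]\<^bsub>B\<^esub> i = \<one>\<^bsub>B\<^esub>"
    by (metis GB.r_cancel_one' rH GB.nat_pow_closed GB.inv_closed x)
  then have "GB.ord x dvd i" using x by (simp add: GB.pow_eq_id)
  then show False using i by (simp add: nat_dvd_not_less)
qed

end
end


context wr_setup begin

definition Tm :: "'b \<Rightarrow> ('b \<Rightarrow> 'a) \<Rightarrow> ('b \<Rightarrow> 'a)" where
  "Tm x \<alpha> = (\<lambda>b\<in>H. if b \<in> reps x then P \<alpha> x (GB.ord x) b else \<alpha> b)"

context
  fixes x assumes x: "x \<in> H"
begin

lemma cyc_one:
  assumes "\<alpha> \<in> H \<rightarrow>\<^sub>E carrier A" "b \<in> H"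
  shows "P \<alpha> x 1 b = \<alpha> b"
  using assms x by (simp add: PiE_iff)

lemma cyc_split:
  assumes a: "\<alpha> \<in> H \<rightarrow>\<^sub>E carrier A" and r: "r \<in> H"
  shows "P \<alpha> x (GB.ord x) r = \<alpha> r \<otimes>\<^bsub>A\<^esub> P \<alpha> x (GB.ord x - 1) (inv\<^bsub>B\<^esub> x \<otimes>\<^bsub>B\<^esub> r)"
proof -
  have "GB.ord x = 1 + (GB.ord x - 1)" using ord_x_pos[OF x] by simp
  then have "P \<alpha> x (GB.ord x) r = P \<alpha> x (1 + (GB.ord x - 1)) r" by simp
  also have "\<dots> = P \<alpha> x 1 r \<otimes>\<^bsub>A\<^esub> P \<alpha> x (GB.ord x - 1) ((inv\<^bsub>B\<^esub> x) [^]\<^bsub>B\<^esub> (1::nat) \<otimes>\<^bsub>B\<^esub> r)"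
    by (rule cyc_add[OF a x r])
  also have "\<dots> = \<alpha> r \<otimes>\<^bsub>A\<^esub> P \<alpha> x (GB.ord x - 1) (inv\<^bsub>B\<^esub> x \<otimes>\<^bsub>B\<^esub> r)"
    using cyc_one[OF a r] x by simp
  finally show ?thesis .
qed

lemma cyc_cong:
  assumes "\<And>i. i < n \<Longrightarrow> \<alpha> ((inv\<^bsub>B\<^esub> x) [^]\<^bsub>B\<^esub> i \<otimes>\<^bsub>B\<^esub> b) = \<beta> ((inv\<^bsub>B\<^esub> x) [^]\<^bsub>B\<^esub> i \<otimes>\<^bsub>B\<^esub> b)"
  shows "P \<alpha> x n b = P \<beta> x n b"
  using assms by (induction n) auto

lemma off_points:
  assumes r: "r \<in> reps x" and i: "i < GB.ord x - 1"
  shows "(inv\<^bsub>B\<^esub> x) [^]\<^bsub>B\<^esub> i \<otimes>\<^bsub>B\<^esub> (inv\<^bsub>B\<^esub> x \<otimes>\<^bsub>B\<^esub> r) \<in> H - reps x"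
proof -
  have rH: "r \<in> H" using r reps_sub[OF x] by auto
  have e: "(inv\<^bsub>B\<^esub> x) [^]\<^bsub>B\<^esub> i \<otimes>\<^bsub>B\<^esub> (inv\<^bsub>B\<^esub> x \<otimes>\<^bsub>B\<^esub> r) = (inv\<^bsub>B\<^esub> x) [^]\<^bsub>B\<^esub> Suc i \<otimes>\<^bsub>B\<^esub> r"
    using x rH by (simp add: GB.m_assoc)
  show ?thesis unfolding e using reps_sep[OF x r, of "Suc i"] i rH x by simp
qed

lemma c_eq:
  assumes a: "\<alpha> \<in> H \<rightarrow>\<^sub>E carrier A" and be: "\<beta> \<in> H \<rightarrow>\<^sub>E carrier A"
    and agree: "\<And>b. b \<in> H - reps x \<Longrightarrow> \<alpha> b = \<beta> b" and r: "r \<in> reps x"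
  shows "P \<alpha> x (GB.ord x - 1) (inv\<^bsub>B\<^esub> x \<otimes>\<^bsub>B\<^esub> r) = P \<beta> x (GB.ord x - 1) (inv\<^bsub>B\<^esub> x \<otimes>\<^bsub>B\<^esub> r)"
  by (rule cyc_cong) (rule agree[OF off_points[OF r]])

lemma Tm_PiE:
  assumes a: "\<alpha> \<in> H \<rightarrow>\<^sub>E carrier A"
  shows "Tm x \<alpha> \<in> H \<rightarrow>\<^sub>E carrier A"
  using a cyc_closed[OF a x] unfolding Tm_def by (auto simp: PiE_iff)

lemma Tm_off: "b \<in> H - reps x \<Longrightarrow> Tm x \<alpha> b = \<alpha> b"
  unfolding Tm_def by simp

lemma Tm_on: "r \<in> reps x \<Longrightarrow> Tm x \<alpha> r = P \<alpha> x (GB.ord x) r"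
  unfolding Tm_def using reps_sub[OF x] by auto

lemma inj_Tm: "inj_on (Tm x) (H \<rightarrow>\<^sub>E carrier A)"
proof (rule inj_onI)
  fix \<alpha> \<beta> assume a: "\<alpha> \<in> H \<rightarrow>\<^sub>E carrier A" and be: "\<beta> \<in> H \<rightarrow>\<^sub>E carrier A" and e: "Tm x \<alpha> = Tm x \<beta>"
  have off: "\<alpha> b = \<beta> b" if "b \<in> H - reps x" for b
    using Tm_off[OF that, of \<alpha>] Tm_off[OF that, of \<beta>] e by simp
  have "\<alpha> b = \<beta> b" for b
  proof (cases "b \<in> H")
    case False
    then show ?thesis using PiE_arb[OF a False] PiE_arb[OF be False] by simp
  next
    case True
    show ?thesis
    proof (cases "b \<in> reps x")
      case False
      then show ?thesis using off True by simp
    next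
      case r: True
      have "\<alpha> b \<otimes>\<^bsub>A\<^esub> P \<alpha> x (GB.ord x - 1) (inv\<^bsub>B\<^esub> x \<otimes>\<^bsub>B\<^esub> b) = \<beta> b \<otimes>\<^bsub>A\<^esub> P \<beta> x (GB.ord x - 1) (inv\<^bsub>B\<^esub> x \<otimes>\<^bsub>B\<^esub> b)"
      proof -
        have "\<alpha> b \<otimes>\<^bsub>A\<^esub> P \<alpha> x (GB.ord x - 1) (inv\<^bsub>B\<^esub> x \<otimes>\<^bsub>B\<^esub> b) = P \<alpha> x (GB.ord x) b"
          by (rule cyc_split[OF a True, symmetric])
        also have "\<dots> = Tm x \<alpha> b" by (rule Tm_on[OF r, symmetric])
        also have "\<dots> = Tm x \<beta> b" by (simp only: e)
        also have "\<dots> = P \<beta> x (GB.ord x) b" by (rule Tm_on[OF r])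
        also have "\<dots> = \<beta> b \<otimes>\<^bsub>A\<^esub> P \<beta> x (GB.ord x - 1) (inv\<^bsub>B\<^esub> x \<otimes>\<^bsub>B\<^esub> b)"
          by (rule cyc_split[OF be True])
        finally show ?thesis .
      qed
      then have "\<alpha> b \<otimes>\<^bsub>A\<^esub> P \<alpha> x (GB.ord x - 1) (inv\<^bsub>B\<^esub> x \<otimes>\<^bsub>B\<^esub> b) = \<beta> b \<otimes>\<^bsub>A\<^esub> P \<alpha> x (GB.ord x - 1) (inv\<^bsub>B\<^esub> x \<otimes>\<^bsub>B\<^esub> b)"
        using c_eq[OF a be off r] by simp
      moreover have "P \<alpha> x (GB.ord x - 1) (inv\<^bsub>B\<^esub> x \<otimes>\<^bsub>B\<^esub> b) \<in> carrier A"
        using cyc_closed[OF a x] True x by simp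
      moreover have "\<alpha> b \<in> carrier A" "\<beta> b \<in> carrier A" using a be True by (auto simp: PiE_iff)
      ultimately show ?thesis using GA.r_cancel by blast
    qed
  qed
  then show "\<alpha> = \<beta>" by (simp add: fun_eq_iff)
qed

lemma Tm_image: "Tm x ` (H \<rightarrow>\<^sub>E carrier A) = H \<rightarrow>\<^sub>E carrier A"
proof (rule card_subset_eq)
  show "finite (H \<rightarrow>\<^sub>E carrier A)" using finA finB by (simp add: finite_PiE)
  show "Tm x ` (H \<rightarrow>\<^sub>E carrier A) \<subseteq> H \<rightarrow>\<^sub>E carrier A" using Tm_PiE by auto
  show "card (Tm x ` (H \<rightarrow>\<^sub>E carrier A)) = card (H \<rightarrow>\<^sub>E carrier A)"
    using inj_Tm by (rule card_image)
qed

lemma inv_pow_pred: "(inv\<^bsub>B\<^esub> x) [^]\<^bsub>B\<^esub> (GB.ord x - 1) = x"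
proof -
  have "(inv\<^bsub>B\<^esub> x) [^]\<^bsub>B\<^esub> (GB.ord x - 1) \<otimes>\<^bsub>B\<^esub> inv\<^bsub>B\<^esub> x = (inv\<^bsub>B\<^esub> x) [^]\<^bsub>B\<^esub> (GB.ord x * 1)"
    using x ord_x_pos[OF x] GB.nat_pow_Suc[of "inv\<^bsub>B\<^esub> x" "GB.ord x - 1"] by simp
  also have "\<dots> = \<one>\<^bsub>B\<^esub>" by (rule inv_pow_ord[OF x])
  finally have "(inv\<^bsub>B\<^esub> x) [^]\<^bsub>B\<^esub> (GB.ord x - 1) \<otimes>\<^bsub>B\<^esub> inv\<^bsub>B\<^esub> x = \<one>\<^bsub>B\<^esub>" .
  then have "inv\<^bsub>B\<^esub> (inv\<^bsub>B\<^esub> x) = (inv\<^bsub>B\<^esub> x) [^]\<^bsub>B\<^esub> (GB.ord x - 1)"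
    using x by (intro GB.inv_equality) auto
  then show ?thesis using x by simp
qed

lemma ord_cyc_shift:
  assumes a: "\<alpha> \<in> H \<rightarrow>\<^sub>E carrier A" and b: "b \<in> H"
  shows "GA.ord (P \<alpha> x (GB.ord x) (x \<otimes>\<^bsub>B\<^esub> b)) = GA.ord (P \<alpha> x (GB.ord x) b)"
proof -
  have xb: "x \<otimes>\<^bsub>B\<^esub> b \<in> H" using x b by simp
  have e1: "inv\<^bsub>B\<^esub> x \<otimes>\<^bsub>B\<^esub> (x \<otimes>\<^bsub>B\<^esub> b) = b" using x b by (simp add: GB.m_assoc[symmetric])
  have s1: "P \<alpha> x (GB.ord x) (x \<otimes>\<^bsub>B\<^esub> b) = \<alpha> (x \<otimes>\<^bsub>B\<^esub> b) \<otimes>\<^bsub>A\<^esub> P \<alpha> x (GB.ord x - 1) b"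
    using cyc_split[OF a xb] e1 by simp
  have "GB.ord x = (GB.ord x - 1) + 1" using ord_x_pos[OF x] by simp
  then have "P \<alpha> x (GB.ord x) b = P \<alpha> x ((GB.ord x - 1) + 1) b" by simp
  also have "\<dots> = P \<alpha> x (GB.ord x - 1) b \<otimes>\<^bsub>A\<^esub> P \<alpha> x 1 ((inv\<^bsub>B\<^esub> x) [^]\<^bsub>B\<^esub> (GB.ord x - 1) \<otimes>\<^bsub>B\<^esub> b)"
    by (rule cyc_add[OF a x b])
  also have "\<dots> = P \<alpha> x (GB.ord x - 1) b \<otimes>\<^bsub>A\<^esub> \<alpha> (x \<otimes>\<^bsub>B\<^esub> b)"
    unfolding inv_pow_pred using cyc_one[OF a xb] by simp
  finally have s2: "P \<alpha> x (GB.ord x) b = P \<alpha> x (GB.ord x - 1) b \<otimes>\<^bsub>A\<^esub> \<alpha> (x \<otimes>\<^bsub>B\<^esub> b)" .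
  have c1: "\<alpha> (x \<otimes>\<^bsub>B\<^esub> b) \<in> carrier A" using a xb by (auto simp: PiE_iff)
  have c2: "P \<alpha> x (GB.ord x - 1) b \<in> carrier A" using cyc_closed[OF a x b] .
  show ?thesis unfolding s1 s2 using GA.ord_swap[OF c2 c1] .
qed

lemma ord_cyc_pow:
  assumes a: "\<alpha> \<in> H \<rightarrow>\<^sub>E carrier A" and b: "b \<in> H"
  shows "GA.ord (P \<alpha> x (GB.ord x) (x [^]\<^bsub>B\<^esub> (i::nat) \<otimes>\<^bsub>B\<^esub> b)) = GA.ord (P \<alpha> x (GB.ord x) b)"
proof (induction i)
  case 0
  then show ?case using b by simp
next
  case (Suc i)
  have e: "x [^]\<^bsub>B\<^esub> Suc i \<otimes>\<^bsub>B\<^esub> b = x \<otimes>\<^bsub>B\<^esub> (x [^]\<^bsub>B\<^esub> i \<otimes>\<^bsub>B\<^esub> b)"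
    by (metis GB.m_assoc GB.nat_pow_Suc2 GB.nat_pow_closed x b)
  have "x [^]\<^bsub>B\<^esub> i \<otimes>\<^bsub>B\<^esub> b \<in> H" using x b by simp
  then show ?case unfolding e using ord_cyc_shift[OF a] Suc by simp
qed

lemma Lcm_set_eq:
  assumes a: "\<alpha> \<in> H \<rightarrow>\<^sub>E carrier A"
  shows "(\<lambda>b. GA.ord (P \<alpha> x (GB.ord x) b)) ` H = (\<lambda>r. GA.ord (Tm x \<alpha> r)) ` reps x"
proof
  show "(\<lambda>b. GA.ord (P \<alpha> x (GB.ord x) b)) ` H \<subseteq> (\<lambda>r. GA.ord (Tm x \<alpha> r)) ` reps x"
  proof
    fix y assume "y \<in> (\<lambda>b. GA.ord (P \<alpha> x (GB.ord x) b)) ` H"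
    then obtain b where b: "b \<in> H" "y = GA.ord (P \<alpha> x (GB.ord x) b)" by auto
    obtain r i where r: "r \<in> reps x" "b = x [^]\<^bsub>B\<^esub> (i::nat) \<otimes>\<^bsub>B\<^esub> r" using reps_cover[OF x b(1)] by auto
    have rH: "r \<in> H" using r reps_sub[OF x] by auto
    have "y = GA.ord (Tm x \<alpha> r)" using b r ord_cyc_pow[OF a rH, of i] Tm_on[OF r(1)] by simp
    then show "y \<in> (\<lambda>r. GA.ord (Tm x \<alpha> r)) ` reps x" using r by blast
  qed
  show "(\<lambda>r. GA.ord (Tm x \<alpha> r)) ` reps x \<subseteq> (\<lambda>b. GA.ord (P \<alpha> x (GB.ord x) b)) ` H"
    using reps_sub[OF x] Tm_on by auto
qed

lemma sum_fixed_x: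
  "(\<Sum>\<alpha>\<in>H \<rightarrow>\<^sub>E carrier A. real (GW.ord (\<alpha>, x)))
    = real (GB.ord x) * real (card (carrier A) ^ (card H - card (reps x)))
      * (\<Sum>m\<in>{m. m dvd order A}. real m * tau (order A div m)
           * real (card {g\<in>carrier A. g [^]\<^bsub>A\<^esub> m = \<one>\<^bsub>A\<^esub>}) ^ card (reps x))"
proof -
  define g where "g \<beta> = real (Lcm ((\<lambda>r. GA.ord (\<beta> r)) ` reps x))" for \<beta> :: "'b \<Rightarrow> 'a"
  have finR: "finite (reps x)" using reps_sub[OF x] finB finite_subset by blast
  have "(\<Sum>\<alpha>\<in>H \<rightarrow>\<^sub>E carrier A. real (GW.ord (\<alpha>, x))) = (\<Sum>\<alpha>\<in>H \<rightarrow>\<^sub>E carrier A. real (GB.ord x) * g (Tm x \<alpha>))"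
  proof (intro sum.cong refl)
    fix \<alpha> assume a: "\<alpha> \<in> H \<rightarrow>\<^sub>E carrier A"
    show "real (GW.ord (\<alpha>, x)) = real (GB.ord x) * g (Tm x \<alpha>)"
      unfolding ord_W[OF a x] g_def Lcm_set_eq[OF a] by simp
  qed
  also have "\<dots> = real (GB.ord x) * (\<Sum>\<alpha>\<in>H \<rightarrow>\<^sub>E carrier A. g (Tm x \<alpha>))"
    by (simp add: sum_distrib_left)
  also have "(\<Sum>\<alpha>\<in>H \<rightarrow>\<^sub>E carrier A. g (Tm x \<alpha>)) = (\<Sum>\<alpha>\<in>H \<rightarrow>\<^sub>E carrier A. g \<alpha>)"
    using sum.reindex[OF inj_Tm, of g] Tm_image by (simp add: comp_def)
  also have "\<dots> = (\<Sum>\<alpha>\<in>PiE (reps x \<union> (H - reps x)) (\<lambda>_. carrier A). g (restrict \<alpha> (reps x)))"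
  proof -
    have "reps x \<union> (H - reps x) = H" using reps_sub[OF x] by auto
    moreover have "g (restrict \<alpha> (reps x)) = g \<alpha>" for \<alpha>
      unfolding g_def by (rule arg_cong[where f = "\<lambda>S. real (Lcm S)"]) (auto intro!: image_cong)
    ultimately show ?thesis by simp
  qed
  also have "\<dots> = real (card (carrier A) ^ card (H - reps x)) * (\<Sum>a\<in>PiE (reps x) (\<lambda>_. carrier A). g a)"
    by (rule sum_PiE_restrict) (use finR finB in auto)
  also have "card (H - reps x) = card H - card (reps x)"
    using reps_sub[OF x] finR by (simp add: card_Diff_subset)
  also have "(\<Sum>a\<in>PiE (reps x) (\<lambda>_. carrier A). g a) = (\<Sum>m\<in>{m. m dvd order A}. real m * tau (order A div m)
           * real (card {g\<in>carrier A. g [^]\<^bsub>A\<^esub> m = \<one>\<^bsub>A\<^esub>}) ^ card (reps x))"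
    unfolding g_def by (rule GA.sum_Lcm_PiE[OF finA finR])
  finally show ?thesis by (simp add: mult.assoc)
qed

end
end


lemma div_div_self_nat: "(n::nat) dvd N \<Longrightarrow> N > 0 \<Longrightarrow> N div (N div n) = n"
  by (metis dvd_div_mult_self dvd_mult_div_cancel nonzero_mult_div_cancel_left div_mult_self1_is_m
      bot_nat_0.not_eq_extremum div_0 dvd_div_iff_mult mult_0_right)

lemma sum_divisors_flip:
  assumes "N > 0"
  shows "(\<Sum>k\<in>{k. k dvd N}. f k) = (\<Sum>n\<in>{n. n dvd (N::nat)}. f (N div n))"
proof (rule sum.reindex_bij_witness[where i = "\<lambda>n. N div n" and j = "\<lambda>n. N div n"])
  fix a assume "a \<in> {n. n dvd N}"
  then show "N div (N div a) = a" "N div a \<in> {k. k dvd N}" using assms div_div_self_nat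
    by (auto simp: div_dvd_div dvd_div_iff_mult elim!: dvdE)
next
  fix a assume "a \<in> {k. k dvd N}"
  then show "N div (N div a) = a" "N div a \<in> {n. n dvd N}" using assms div_div_self_nat
    by (auto simp: dvd_div_iff_mult elim!: dvdE)
next
  fix a assume "a \<in> {k. k dvd N}"
  then show "f (N div (N div a)) = f a" using assms div_div_self_nat by simp
qed

context wr_setup begin

lemma card_reps_div: "x \<in> H \<Longrightarrow> card (reps x) = card H div GB.ord x"
  using card_reps[of x] ord_x_pos[of x] by (metis nonzero_mult_div_cancel_right not_gr0)

lemma sum_W:
  "(\<Sum>g\<in>carrier (wreath A B). real (GW.ord g)) =
   (\<Sum>x\<in>H. real (GB.ord x) * real (card (carrier A) ^ (card H - card H div GB.ord x))
      * (\<Sum>m\<in>{m. m dvd order A}. real m * tau (order A div m)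
           * real (card {g\<in>carrier A. g [^]\<^bsub>A\<^esub> m = \<one>\<^bsub>A\<^esub>}) ^ (card H div GB.ord x)))"
proof -
  have "(\<Sum>g\<in>carrier (wreath A B). real (GW.ord g)) = (\<Sum>\<alpha>\<in>H \<rightarrow>\<^sub>E carrier A. \<Sum>x\<in>H. real (GW.ord (\<alpha>, x)))"
    unfolding W_carrier by (simp add: sum.cartesian_product)
  also have "\<dots> = (\<Sum>x\<in>H. \<Sum>\<alpha>\<in>H \<rightarrow>\<^sub>E carrier A. real (GW.ord (\<alpha>, x)))"
    by (rule sum.swap)
  also have "\<dots> = (\<Sum>x\<in>H. real (GB.ord x) * real (card (carrier A) ^ (card H - card H div GB.ord x))
      * (\<Sum>m\<in>{m. m dvd order A}. real m * tau (order A div m)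
           * real (card {g\<in>carrier A. g [^]\<^bsub>A\<^esub> m = \<one>\<^bsub>A\<^esub>}) ^ (card H div GB.ord x)))"
    by (intro sum.cong refl) (simp add: sum_fixed_x card_reps_div)
  finally show ?thesis .
qed

lemma sum_by_order:
  fixes F :: "nat \<Rightarrow> real"
  shows "(\<Sum>x\<in>H. F (GB.ord x)) = (\<Sum>k\<in>{k. k dvd card H}. real (card {x\<in>H. GB.ord x = k}) * F k)"
proof -
  have N0: "card H > 0" using finB GB.subgroup_self by (simp add: card_gt_0_iff GB.carrier_not_empty)
  have finD: "finite {k. k dvd card H}" using N0 by simp
  have "(\<Sum>x\<in>H. F (GB.ord x)) = (\<Sum>x\<in>H. \<Sum>k\<in>{k. k dvd card H}. if GB.ord x = k then F k else 0)"
  proof (intro sum.cong refl)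
    fix x assume x: "x \<in> H"
    have "GB.ord x \<in> {k. k dvd card H}" using GB.ord_dvd_group_order[OF x] by (simp add: order_def)
    then show "F (GB.ord x) = (\<Sum>k\<in>{k. k dvd card H}. if GB.ord x = k then F k else 0)"
      using finD by (simp add: sum.delta)
  qed
  also have "\<dots> = (\<Sum>k\<in>{k. k dvd card H}. \<Sum>x\<in>H. if GB.ord x = k then F k else 0)"
    by (rule sum.swap)
  also have "\<dots> = (\<Sum>k\<in>{k. k dvd card H}. real (card {x\<in>H. GB.ord x = k}) * F k)"
  proof (intro sum.cong refl)
    fix k
    show "(\<Sum>x\<in>H. if GB.ord x = k then F k else 0) = real (card {x\<in>H. GB.ord x = k}) * F k"
      using sum.inter_filter[OF finB, of "\<lambda>_. F k" "\<lambda>x. GB.ord x = k"] by simp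
  qed
  finally show ?thesis .
qed

end


theorem theorem1:
  fixes A :: "('a, 'c) monoid_scheme" and B :: "('b, 'd) monoid_scheme"
  assumes "group A" and "group B"
    and "finite (carrier A)" and "finite (carrier B)"
    and "card (carrier A) \<ge> 2" and "card (carrier B) \<ge> 2"
  shows "avg_order (wreath A B) =
    (\<Sum>m\<in>{m. m dvd card (carrier A)}. \<Sum>n\<in>{n. n dvd card (carrier B)}.
       real m / real n
       * (real (card {g\<in>carrier A. g [^]\<^bsub>A\<^esub> m = \<one>\<^bsub>A\<^esub>}) / real (card (carrier A))) ^ n
       * real (card {g\<in>carrier B. group.ord B g = card (carrier B) div n})
       * tau (card (carrier A) div m))"
proof -
  interpret wr_setup A B using assms by (simp add: wr_setup_def wr_setup_axioms_def)
  define M where "M = card (carrier A)"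
  define N where "N = card (carrier B)"
  have M0: "M > 0" using assms unfolding M_def by simp
  have N0: "N > 0" using assms unfolding N_def by simp
  define s where "s (m::nat) = real (card {g\<in>carrier A. g [^]\<^bsub>A\<^esub> m = \<one>\<^bsub>A\<^esub>})" for m
  define c where "c k = real (card {x\<in>carrier B. group.ord B x = k})" for k
  define S where "S r = (\<Sum>m\<in>{m. m dvd M}. real m * tau (M div m) * s m ^ r)" for r
  define F where "F k = real k * real (M ^ (N - N div k)) * S (N div k)" for k
  have "(\<Sum>g\<in>carrier (wreath A B). real (GW.ord g)) = (\<Sum>x\<in>carrier B. F (GB.ord x))"
    unfolding sum_W F_def S_def s_def M_def N_def by (simp add: order_def)
  also have "\<dots> = (\<Sum>k\<in>{k. k dvd N}. c k * F k)"
    unfolding sum_by_order c_def N_def ..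
  also have "\<dots> = (\<Sum>n\<in>{n. n dvd N}. c (N div n) * F (N div n))"
    by (rule sum_divisors_flip[OF N0])
  finally have sumeq: "(\<Sum>g\<in>carrier (wreath A B). real (GW.ord g)) = (\<Sum>n\<in>{n. n dvd N}. c (N div n) * F (N div n))" .
  have cardW: "card (carrier (wreath A B)) = M ^ N * N"
    unfolding W_carrier M_def N_def using finA finB by (simp add: card_cartesian_product card_funcsetE)
  have "avg_order (wreath A B) = (\<Sum>n\<in>{n. n dvd N}. c (N div n) * F (N div n) / (real M ^ N * real N))"
    unfolding avg_order_def sumeq cardW by (simp add: sum_divide_distrib)
  also have "\<dots> = (\<Sum>n\<in>{n. n dvd N}. \<Sum>m\<in>{m. m dvd M}.
       real m / real n * (s m / real M) ^ n * c (N div n) * tau (M div m))"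
  proof (intro sum.cong refl)
    fix n assume n: "n \<in> {n. n dvd N}"
    have n0: "n > 0" using n N0 by (auto intro: gr0I)
    have nN: "n \<le> N" using n N0 by (simp add: dvd_imp_le)
    have e1: "N div (N div n) = n" using n N0 div_div_self_nat by simp
    have e2: "real (N div n) = real N / real n" using n by (simp add: real_of_nat_div)
    have e3: "real (M ^ (N - n)) = real M ^ N / real M ^ n"
    proof -
      have "real (M ^ (N - n)) = real M ^ (N - n)" by (rule of_nat_power)
      also have "\<dots> = real M ^ N / real M ^ n" using M0 nN by (intro power_diff) auto
      finally show ?thesis .
    qed
    have "c (N div n) * F (N div n) / (real M ^ N * real N) = c (N div n) * S n / (real n * real M ^ n)"
      unfolding F_def e1 e2 e3 using M0 N0 n0 by (simp add: field_simps)
    also have "\<dots> = (\<Sum>m\<in>{m. m dvd M}. real m / real n * (s m / real M) ^ n * c (N div n) * tau (M div m))"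
      unfolding S_def sum_distrib_left sum_divide_distrib
      using M0 n0 by (intro sum.cong refl) (simp add: power_divide field_simps)
    finally show "c (N div n) * F (N div n) / (real M ^ N * real N) =
        (\<Sum>m\<in>{m. m dvd M}. real m / real n * (s m / real M) ^ n * c (N div n) * tau (M div m))" .
  qed
  also have "\<dots> = (\<Sum>m\<in>{m. m dvd M}. \<Sum>n\<in>{n. n dvd N}.
       real m / real n * (s m / real M) ^ n * c (N div n) * tau (M div m))"
    by (rule sum.swap)
  finally show ?thesis unfolding M_def N_def s_def c_def .
qed

end
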